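(* Let $d \geq 1$ be a fixed integer, let $p_n \in \mathbb{N}$ with $p_n > d$, and let $W_n \sim \mathcal{W}_{p_n}(I_{p_n}/n, n)$, partitioned as $$W_n = \begin{pmatrix} W_{n,11} & W_{n,12} \\ W_{n,21} & W_{n,22} \end{pmatrix},$$ where $W_{n,11}$ has size $d \times d$. Then, as $n, p_n \to \infty$: (1) if $p_n/n \to 0$, then $\mathrm{tr}(W_{n,12}W_{n,21}) = \mathcal{O}_p(p_n/n)$; (2) if $p_n/n \to \infty$ and $p_n/(n\sqrt{\lambda_n}) \to 0$ for some sequence $\lambda_n \to \infty$, then $\mathrm{tr}(W_{n,12}W_{n,21}) = o_p(\sqrt{\lambda_n})$.
   Context: $\mathcal{W}_p(\Sigma, \nu)$ denotes the $p \times p$ Wishart distribution with scale matrix $\Sigma$ and $\nu$ degrees of freedom; thus $W_n$ is distributed as $\frac{1}{n}\sum_{i=1}^n z_i z_i'$ for i.i.d. $z_i \sim \mathcal{N}_{p_n}(0, I_{p_n})$. $\mathcal{O}_p$ and $o_p$ denote stochastic boundedness and convergence to zero in probability (relative to the indicated rate). *)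

theory Defs
  imports "HOL-Probability.Probability"
begin

text \<open>Entry (a,b) of W_n = (1/n) sum_{i<n} z_i z_i', with z_i = (X n i 0, ..., X n i (p_n - 1)).\<close>
definition wishart_W :: "(nat \<Rightarrow> nat \<Rightarrow> nat \<Rightarrow> 'a \<Rightarrow> real) \<Rightarrow> nat \<Rightarrow> nat \<Rightarrow> nat \<Rightarrow> 'a \<Rightarrow> real" where
  "wishart_W X n a b \<omega> = (1 / real n) * (\<Sum>i<n. X n i a \<omega> * X n i b \<omega>)"

definition tr_W12_W21 :: "nat \<Rightarrow> (nat \<Rightarrow> nat) \<Rightarrow> (nat \<Rightarrow> nat \<Rightarrow> nat \<Rightarrow> 'a \<Rightarrow> real) \<Rightarrow> nat \<Rightarrow> 'a \<Rightarrow> real" where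
  "tr_W12_W21 d p X n \<omega> =
     (\<Sum>a<d. \<Sum>b\<in>{d..<p n}. wishart_W X n a b \<omega> * wishart_W X n b a \<omega>)"

definition bigO_p :: "'a measure \<Rightarrow> (nat \<Rightarrow> 'a \<Rightarrow> real) \<Rightarrow> (nat \<Rightarrow> real) \<Rightarrow> bool" where
  "bigO_p M Y r \<longleftrightarrow> (\<forall>\<epsilon>>0. \<exists>C. \<exists>N. \<forall>n\<ge>N.
      measure M {\<omega>\<in>space M. \<bar>Y n \<omega>\<bar> > C * r n} < \<epsilon>)"

definition smallo_p :: "'a measure \<Rightarrow> (nat \<Rightarrow> 'a \<Rightarrow> real) \<Rightarrow> (nat \<Rightarrow> real) \<Rightarrow> bool" where
  "smallo_p M Y r \<longleftrightarrow> (\<forall>\<epsilon>>0.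
      ((\<lambda>n. measure M {\<omega>\<in>space M. \<bar>Y n \<omega>\<bar> > \<epsilon> * r n}) \<longlongrightarrow> 0) sequentially)"

end

theory Submission imports Defs begin

lemma moments:
  fixes X :: "nat \<Rightarrow> nat \<Rightarrow> nat \<Rightarrow> 'a \<Rightarrow> real" and n i j a b :: nat and p :: "nat \<Rightarrow> nat"
  assumes P: "prob_space M"
    and indep: "prob_space.indep_vars M (\<lambda>_. borel) (\<lambda>(i, j). X n i j) ({..<n} \<times> {..<p n})"
    and distr: "\<And>i j. i < n \<Longrightarrow> j < p n \<Longrightarrow> distributed M lborel (X n i j) std_normal_density"
    and ij: "i < n" "j < n" and ab: "a < p n" "b < p n" "a \<noteq> b"
  shows "integrable M (\<lambda>\<omega>. X n i a \<omega> * X n i b \<omega> * (X n j a \<omega> * X n j b \<omega>))"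
    "(\<integral>\<omega>. X n i a \<omega> * X n i b \<omega> * (X n j a \<omega> * X n j b \<omega>) \<partial>M) = (if i = j then 1 else 0)"
proof -
  interpret prob_space M by (rule P)
  define Z where "Z = (\<lambda>(i, j). X n i j)"
  have intk: "integrable M (\<lambda>\<omega>. (Z k \<omega>)^m)" if hk: "k \<in> {..<n} \<times> {..<p n}" for k m
  proof -
    obtain i j where k: "k = (i,j)" "i < n" "j < p n" using hk by (cases k) auto
    have "integrable lborel (\<lambda>x. std_normal_density x * x^m)" by (rule integrable_std_normal_moment)
    then show ?thesis using distributed_integrable[OF distr[OF k(2,3)], of "\<lambda>x. x^m"]
      by (simp add: k Z_def)
  qed
  have m1: "(\<integral>\<omega>. (Z k \<omega>)^1 \<partial>M) = 0" if hk: "k \<in> {..<n} \<times> {..<p n}" for k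
  proof -
    obtain i j where k: "k = (i,j)" "i < n" "j < p n" using hk by (cases k) auto
    show ?thesis using standard_normal_distributed_expectation[OF distr[OF k(2,3)]] by (simp add: k Z_def)
  qed
  have m2: "(\<integral>\<omega>. (Z k \<omega>)^2 \<partial>M) = 1" if hk: "k \<in> {..<n} \<times> {..<p n}" for k
  proof -
    obtain i j where k: "k = (i,j)" "i < n" "j < p n" using hk by (cases k) auto
    have "(\<integral>x. std_normal_density x * x^(2*1) \<partial>lborel) = 1"
      by (subst integral_std_normal_moment_even) simp
    then show ?thesis using distributed_integral[OF distr[OF k(2,3)], of "\<lambda>x. x^2"]
      by (simp add: k Z_def)
  qed
  have ind: "indep_vars (\<lambda>_. borel) (\<lambda>k \<omega>. (Z k \<omega>)^(g k)) J"
    if "J \<subseteq> {..<n} \<times> {..<p n}" for g J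
  proof -
    have "indep_vars (\<lambda>_. borel) (\<lambda>k \<omega>. (Z k \<omega>)^(g k)) ({..<n} \<times> {..<p n})"
      using indep_vars_compose2[OF indep[folded Z_def], of "\<lambda>k x. x^(g k)" "\<lambda>_. borel"] by simp
    then show ?thesis using that by (rule indep_vars_subset)
  qed
  have prodI: "integrable M (\<lambda>\<omega>. \<Prod>k\<in>J. (Z k \<omega>)^(g k))"
     "(\<integral>\<omega>. (\<Prod>k\<in>J. (Z k \<omega>)^(g k)) \<partial>M) = (\<Prod>k\<in>J. \<integral>\<omega>. (Z k \<omega>)^(g k) \<partial>M)"
    if "J \<subseteq> {..<n} \<times> {..<p n}" for g J
  proof -
    have fin: "finite J" by (rule finite_subset[OF that]) (intro finite_cartesian_product; simp)
    have ik: "integrable M (\<lambda>\<omega>. (Z k \<omega>)^(g k))" if "k \<in> J" for k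
      by (rule intk) (use \<open>J \<subseteq> _\<close> \<open>k \<in> J\<close> in fast)
    show "integrable M (\<lambda>\<omega>. \<Prod>k\<in>J. (Z k \<omega>)^(g k))"
      by (rule indep_vars_integrable[OF fin ind[OF that]]) (rule ik)
    show "(\<integral>\<omega>. (\<Prod>k\<in>J. (Z k \<omega>)^(g k)) \<partial>M) = (\<Prod>k\<in>J. \<integral>\<omega>. (Z k \<omega>)^(g k) \<partial>M)"
      by (rule indep_vars_lebesgue_integral[OF fin ind[OF that]]) (rule ik)
  qed
  have "integrable M (\<lambda>\<omega>. X n i a \<omega> * X n i b \<omega> * (X n j a \<omega> * X n j b \<omega>)) \<and>
    (\<integral>\<omega>. X n i a \<omega> * X n i b \<omega> * (X n j a \<omega> * X n j b \<omega>) \<partial>M) = (if i = j then 1 else 0)"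
  proof (cases "i = j")
    case True
    let ?J = "{(i,a),(i,b)}"
    have J: "?J \<subseteq> {..<n} \<times> {..<p n}" using ij ab by auto
    have eq: "(\<lambda>\<omega>. X n i a \<omega> * X n i b \<omega> * (X n j a \<omega> * X n j b \<omega>)) = (\<lambda>\<omega>. \<Prod>k\<in>?J. (Z k \<omega>)^((\<lambda>_. 2::nat) k))"
      using True ab by (simp add: Z_def power2_eq_square mult_ac)
    have "(\<Prod>k\<in>?J. \<integral>\<omega>. (Z k \<omega>)^2 \<partial>M) = 1"
      using m2 J by (intro prod.neutral) blast
    then show ?thesis using prodI[OF J, of "\<lambda>_. 2"] True unfolding eq by simp
  next
    case False
    let ?J = "{(i,a),(i,b),(j,a),(j,b)}"
    have J: "?J \<subseteq> {..<n} \<times> {..<p n}" using ij ab by auto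
    have eq: "(\<lambda>\<omega>. X n i a \<omega> * X n i b \<omega> * (X n j a \<omega> * X n j b \<omega>)) = (\<lambda>\<omega>. \<Prod>k\<in>?J. (Z k \<omega>)^((\<lambda>_. 1::nat) k))"
      using False ab by (simp add: Z_def mult_ac)
    have "(\<Prod>k\<in>?J. \<integral>\<omega>. (Z k \<omega>)^1 \<partial>M) = 0"
      using m1[of "(i,a)"] J by (intro prod_zero) auto
    then show ?thesis using prodI[OF J, of "\<lambda>_. 1"] False unfolding eq by simp
  qed
  then show "integrable M (\<lambda>\<omega>. X n i a \<omega> * X n i b \<omega> * (X n j a \<omega> * X n j b \<omega>))"
    "(\<integral>\<omega>. X n i a \<omega> * X n i b \<omega> * (X n j a \<omega> * X n j b \<omega>) \<partial>M) = (if i = j then 1 else 0)" by auto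
qed

lemma markov_T:
  fixes X :: "nat \<Rightarrow> nat \<Rightarrow> nat \<Rightarrow> 'a \<Rightarrow> real" and n d :: nat and p :: "nat \<Rightarrow> nat" and c :: real
  assumes P: "prob_space M"
    and indep: "prob_space.indep_vars M (\<lambda>_. borel) (\<lambda>(i, j). X n i j) ({..<n} \<times> {..<p n})"
    and distr: "\<And>i j. i < n \<Longrightarrow> j < p n \<Longrightarrow> distributed M lborel (X n i j) std_normal_density"
    and dp: "d < p n" and n0: "n > 0" and c0: "c > 0"
  shows "measure M {\<omega>\<in>space M. \<bar>tr_W12_W21 d p X n \<omega>\<bar> > c} \<le> real d * real (p n) / (real n * c)"
proof -
  interpret prob_space M by (rule P)
  define Q where "Q a b \<omega> = (\<Sum>i<n. \<Sum>j<n. X n i a \<omega> * X n i b \<omega> * (X n j a \<omega> * X n j b \<omega>))" for a b \<omega>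
  define T where "T = tr_W12_W21 d p X n"
  have Teq: "T \<omega> = (\<Sum>a<d. \<Sum>b\<in>{d..<p n}. Q a b \<omega> / (real n)^2)" for \<omega>
    unfolding T_def tr_W12_W21_def wishart_W_def Q_def
    by (intro sum.cong refl) (simp add: sum_product power2_eq_square mult_ac)
  have Tnn: "T \<omega> \<ge> 0" for \<omega>
  proof -
    have "wishart_W X n a b \<omega> * wishart_W X n b a \<omega> = (wishart_W X n a b \<omega>)^2" for a b
      unfolding wishart_W_def power2_eq_square by (simp add: mult_ac)
    then show ?thesis unfolding T_def tr_W12_W21_def by (simp add: sum_nonneg)
  qed
  have dQ: "a < d \<Longrightarrow> b \<in> {d..<p n} \<Longrightarrow> a < p n \<and> b < p n \<and> a \<noteq> b" for a b
    using dp by auto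
  have iQ: "integrable M (Q a b)" "integral\<^sup>L M (Q a b) = real n" if "a < d" "b \<in> {d..<p n}" for a b
  proof -
    have ab: "a < p n" "b < p n" "a \<noteq> b" using dQ[OF that] by auto
    have m: "integrable M (\<lambda>\<omega>. X n i a \<omega> * X n i b \<omega> * (X n j a \<omega> * X n j b \<omega>))"
      "(\<integral>\<omega>. X n i a \<omega> * X n i b \<omega> * (X n j a \<omega> * X n j b \<omega>) \<partial>M) = (if i = j then 1 else 0)"
      if "i < n" "j < n" for i j
      using moments[where M=M and X=X and n=n and p=p and a=a and b=b and i=i and j=j, OF P indep distr that ab] by auto
    show "integrable M (Q a b)" unfolding Q_def
      by (auto intro!: integrable_sum m(1))
    have "integral\<^sup>L M (Q a b) = (\<Sum>i<n. \<integral>\<omega>. (\<Sum>j<n. X n i a \<omega> * X n i b \<omega> * (X n j a \<omega> * X n j b \<omega>)) \<partial>M)"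
      unfolding Q_def
      apply (rule Bochner_Integration.integral_sum[where I="{..<n}" and f="\<lambda>i \<omega>. \<Sum>j<n. X n i a \<omega> * X n i b \<omega> * (X n j a \<omega> * X n j b \<omega>)"])
      by (auto intro!: integrable_sum m(1))
    also have "\<dots> = (\<Sum>i<n. \<Sum>j<n. \<integral>\<omega>. X n i a \<omega> * X n i b \<omega> * (X n j a \<omega> * X n j b \<omega>) \<partial>M)"
      by (intro sum.cong refl Bochner_Integration.integral_sum) (auto intro: m(1))
    also have "\<dots> = (\<Sum>i<n. \<Sum>j<n. (if i = j then 1 else 0::real))"
      by (intro sum.cong refl) (simp add: m(2))
    also have "\<dots> = real n" by simp
    finally show "integral\<^sup>L M (Q a b) = real n" .
  qed
  have Tfun: "T = (\<lambda>\<omega>. \<Sum>a<d. \<Sum>b\<in>{d..<p n}. Q a b \<omega> / (real n)^2)" using Teq by auto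
  have intT: "integrable M T" unfolding Tfun using iQ by (auto intro!: Bochner_Integration.integrable_sum integrable_divide_zero)
  have ET: "integral\<^sup>L M T = real d * real (p n - d) / real n"
  proof -
    have "integral\<^sup>L M T = (\<Sum>a<d. \<Sum>b\<in>{d..<p n}. real n / (real n)^2)"
      unfolding Tfun
    proof -
      have "(\<integral>\<omega>. (\<Sum>a<d. \<Sum>b\<in>{d..<p n}. Q a b \<omega> / (real n)^2) \<partial>M) = (\<Sum>a<d. \<integral>\<omega>. (\<Sum>b\<in>{d..<p n}. Q a b \<omega> / (real n)^2) \<partial>M)"
        by (rule Bochner_Integration.integral_sum) (auto intro!: Bochner_Integration.integrable_sum integrable_divide_zero iQ)
      also have "\<dots> = (\<Sum>a<d. \<Sum>b\<in>{d..<p n}. \<integral>\<omega>. Q a b \<omega> / (real n)^2 \<partial>M)"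
        by (intro sum.cong refl Bochner_Integration.integral_sum) (auto intro!: integrable_divide_zero iQ)
      also have "\<dots> = (\<Sum>a<d. \<Sum>b\<in>{d..<p n}. real n / (real n)^2)"
        by (intro sum.cong refl) (simp add: iQ)
      finally show "(\<integral>\<omega>. (\<Sum>a<d. \<Sum>b\<in>{d..<p n}. Q a b \<omega> / (real n)^2) \<partial>M) = (\<Sum>a<d. \<Sum>b\<in>{d..<p n}. real n / (real n)^2)" .
    qed
    also have "\<dots> = real d * real (p n - d) / real n" using n0 by (simp add: power2_eq_square)
    finally show ?thesis .
  qed
  have [measurable]: "T \<in> borel_measurable M" using intT by (rule borel_measurable_integrable)
  have "measure M {\<omega>\<in>space M. \<bar>T \<omega>\<bar> > c} \<le> measure M {\<omega>\<in>space M. T \<omega> \<ge> c}"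
    using Tnn by (intro finite_measure_mono) auto
  also have "\<dots> \<le> integral\<^sup>L M T / c"
    using intT Tnn c0 by (intro integral_Markov_inequality_measure[where A="space M"]) auto
  also have "\<dots> \<le> real d * real (p n) / (real n * c)"
    unfolding ET using c0 n0 dp by (simp add: divide_simps mult_left_mono)
  finally show ?thesis unfolding T_def .
qed

theorem lemma1:
  fixes M :: "'a measure" and d :: nat and p :: "nat \<Rightarrow> nat"
    and X :: "nat \<Rightarrow> nat \<Rightarrow> nat \<Rightarrow> 'a \<Rightarrow> real"
  assumes "prob_space M"
    and "d \<ge> 1"
    and "\<And>n. p n > d"
    and "filterlim p at_top sequentially"
    and "\<And>n. prob_space.indep_vars M (\<lambda>_. borel) (\<lambda>(i, j). X n i j) ({..<n} \<times> {..<p n})"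
    and "\<And>n i j. i < n \<Longrightarrow> j < p n \<Longrightarrow> distributed M lborel (X n i j) std_normal_density"
  shows "(((\<lambda>n. real (p n) / real n) \<longlonglongrightarrow> 0) \<longrightarrow>
            bigO_p M (tr_W12_W21 d p X) (\<lambda>n. real (p n) / real n))
       \<and> (\<forall>lam :: nat \<Rightarrow> real.
            filterlim (\<lambda>n. real (p n) / real n) at_top sequentially \<and>
            filterlim lam at_top sequentially \<and>
            ((\<lambda>n. real (p n) / (real n * sqrt (lam n))) \<longlonglongrightarrow> 0) \<longrightarrow>
            smallo_p M (tr_W12_W21 d p X) (\<lambda>n. sqrt (lam n)))"
proof -
  note P = assms(1) and dp = assms(3) and ind = assms(5) and dis = assms(6)
  have mk: "measure M {\<omega>\<in>space M. \<bar>tr_W12_W21 d p X n \<omega>\<bar> > c} \<le> real d * real (p n) / (real n * c)"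
    if "n > 0" "c > 0" for n c
    by (rule markov_T[where M=M and X=X and n=n and d=d and p=p and c=c, OF P ind[of n] dis dp[of n] that])
  have part1: "bigO_p M (tr_W12_W21 d p X) (\<lambda>n. real (p n) / real n)"
    unfolding bigO_p_def
  proof (intro allI impI)
    fix e :: real assume e: "e > 0"
    have d0: "real d > 0" using assms(2) by simp
    define C where "C = 2 * real d / e"
    have C0: "C > 0" using d0 e by (simp add: C_def)
    have "\<forall>n\<ge>1. measure M {\<omega>\<in>space M. \<bar>tr_W12_W21 d p X n \<omega>\<bar> > C * (real (p n) / real n)} < e"
    proof (intro allI impI)
      fix n :: nat assume n: "n \<ge> 1"
      have pn: "real (p n) > 0" using dp[of n] by simp
      have c0: "C * (real (p n) / real n) > 0" using C0 pn n by simp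
      have "measure M {\<omega>\<in>space M. \<bar>tr_W12_W21 d p X n \<omega>\<bar> > C * (real (p n) / real n)}
          \<le> real d * real (p n) / (real n * (C * (real (p n) / real n)))"
        by (rule mk) (use n c0 in auto)
      also have "\<dots> = e / 2" using pn n e d0 by (simp add: C_def field_simps)
      also have "\<dots> < e" using e by simp
      finally show "measure M {\<omega>\<in>space M. \<bar>tr_W12_W21 d p X n \<omega>\<bar> > C * (real (p n) / real n)} < e" .
    qed
    then show "\<exists>C N. \<forall>n\<ge>N. measure M {\<omega>\<in>space M. \<bar>tr_W12_W21 d p X n \<omega>\<bar> > C * (real (p n) / real n)} < e"
      by blast
  qed
  have part2: "smallo_p M (tr_W12_W21 d p X) (\<lambda>n. sqrt (lam n))"
    if lamlim: "filterlim lam at_top sequentially"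
      and r: "(\<lambda>n. real (p n) / (real n * sqrt (lam n))) \<longlonglongrightarrow> 0" for lam :: "nat \<Rightarrow> real"
    unfolding smallo_p_def
  proof (intro allI impI)
    fix e :: real assume e: "e > 0"
    have ev1: "eventually (\<lambda>n. lam n > 0) sequentially"
      using lamlim by (simp add: filterlim_at_top_dense)
    have ev2: "eventually (\<lambda>n. n \<ge> 1) sequentially" by (rule eventually_ge_at_top)
    let ?f = "\<lambda>n. measure M {\<omega>\<in>space M. \<bar>tr_W12_W21 d p X n \<omega>\<bar> > e * sqrt (lam n)}"
    have lim: "(\<lambda>n. (real d / e) * (real (p n) / (real n * sqrt (lam n)))) \<longlonglongrightarrow> 0"
      using tendsto_mult[OF tendsto_const[of "real d / e"] r] by simp
    have le: "eventually (\<lambda>n. ?f n \<le> (real d / e) * (real (p n) / (real n * sqrt (lam n)))) sequentially"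
      using ev1 ev2
    proof eventually_elim
      case (elim n)
      have c0: "e * sqrt (lam n) > 0" using e elim by simp
      have "?f n \<le> real d * real (p n) / (real n * (e * sqrt (lam n)))"
        by (rule mk) (use elim c0 in auto)
      also have "\<dots> = (real d / e) * (real (p n) / (real n * sqrt (lam n)))"
        by (simp add: field_simps)
      finally show ?case .
    qed
    have ge: "eventually (\<lambda>n. 0 \<le> ?f n) sequentially" by simp
    show "?f \<longlonglongrightarrow> 0"
      by (rule tendsto_sandwich[OF ge le tendsto_const lim])
  qed
  show ?thesis using part1 part2 by blast
qed

end
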